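(* Let $G=(V,E)$ be a graph and $v\in V$. Then $v\in\mathrm{core}(G)$ if and only if one of the following holds: (1) $v$ is isolated; (2) $\gamma(G-v)>\gamma(G)$; (3) $\gamma(G-v)=\gamma(G)$ and every neighbor $w\in N(v)$ satisfies $w\in\mathrm{anticore}(G-v)$.
   Context: All graphs are finite, simple and undirected. $N(v)$ is the set of neighbors of $v$. $\gamma(G)$ is the domination number (minimum size of a dominating set); a minimum dominating set (mds) is a dominating set of size $\gamma(G)$. For a graph $H$, $\mathrm{core}(H)$ is the set of vertices belonging to every mds of $H$, $\mathrm{corona}(H)$ the set of vertices belonging to at least one mds of $H$, and $\mathrm{anticore}(H)=V(H)\setminus\mathrm{corona}(H)$. $G-v$ is the graph obtained by deleting $v$. A vertex is isolated if it has no neighbors. *)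

theory Defs
  imports Main
begin

definition simple_graph :: "'a set \<Rightarrow> ('a \<Rightarrow> 'a \<Rightarrow> bool) \<Rightarrow> bool" where
  "simple_graph V E \<longleftrightarrow> finite V \<and> (\<forall>x y. E x y \<longrightarrow> E y x) \<and> (\<forall>x. \<not> E x x)
     \<and> (\<forall>x y. E x y \<longrightarrow> x \<in> V \<and> y \<in> V)"

definition nbrs :: "'a set \<Rightarrow> ('a \<Rightarrow> 'a \<Rightarrow> bool) \<Rightarrow> 'a \<Rightarrow> 'a set" where
  "nbrs V E v = {w \<in> V. E v w}"

definition isolated :: "'a set \<Rightarrow> ('a \<Rightarrow> 'a \<Rightarrow> bool) \<Rightarrow> 'a \<Rightarrow> bool" where
  "isolated V E v \<longleftrightarrow> nbrs V E v = {}"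

definition dominating :: "'a set \<Rightarrow> ('a \<Rightarrow> 'a \<Rightarrow> bool) \<Rightarrow> 'a set \<Rightarrow> bool" where
  "dominating V E D \<longleftrightarrow> D \<subseteq> V \<and> (\<forall>x \<in> V. x \<in> D \<or> (\<exists>d \<in> D. E x d))"

definition domination_number :: "'a set \<Rightarrow> ('a \<Rightarrow> 'a \<Rightarrow> bool) \<Rightarrow> nat" where
  "domination_number V E = Min (card ` {D. dominating V E D})"

definition mds :: "'a set \<Rightarrow> ('a \<Rightarrow> 'a \<Rightarrow> bool) \<Rightarrow> 'a set \<Rightarrow> bool" where
  "mds V E D \<longleftrightarrow> dominating V E D \<and> card D = domination_number V E"

definition core :: "'a set \<Rightarrow> ('a \<Rightarrow> 'a \<Rightarrow> bool) \<Rightarrow> 'a set" where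
  "core V E = {x \<in> V. \<forall>D. mds V E D \<longrightarrow> x \<in> D}"

definition corona :: "'a set \<Rightarrow> ('a \<Rightarrow> 'a \<Rightarrow> bool) \<Rightarrow> 'a set" where
  "corona V E = {x \<in> V. \<exists>D. mds V E D \<and> x \<in> D}"

definition anticore :: "'a set \<Rightarrow> ('a \<Rightarrow> 'a \<Rightarrow> bool) \<Rightarrow> 'a set" where
  "anticore V E = V - corona V E"

definition del_vertex_V :: "'a set \<Rightarrow> 'a \<Rightarrow> 'a set" where
  "del_vertex_V V v = V - {v}"

definition del_vertex_E :: "('a \<Rightarrow> 'a \<Rightarrow> bool) \<Rightarrow> 'a \<Rightarrow> ('a \<Rightarrow> 'a \<Rightarrow> bool)" where
  "del_vertex_E E v = (\<lambda>x y. E x y \<and> x \<noteq> v \<and> y \<noteq> v)"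

end

theory Submission
  imports Defs
begin

lemma dom_fin: "finite V \<Longrightarrow> finite {D. dominating V E D}"
  by (rule finite_subset[of _ "Pow V"]) (auto simp: dominating_def)

lemma dn_le: "finite V \<Longrightarrow> dominating V E D \<Longrightarrow> domination_number V E \<le> card D"
  unfolding domination_number_def using dom_fin[of V E] by (intro Min_le) auto

lemma mds_ex: "finite V \<Longrightarrow> \<exists>D. mds V E D"
proof -
  assume f: "finite V"
  have "dominating V E V" by (auto simp: dominating_def)
  hence "domination_number V E \<in> card ` {D. dominating V E D}"
    unfolding domination_number_def using dom_fin[OF f, of E] by (intro Min_in) auto
  thus ?thesis by (auto simp: mds_def)
qed

lemma dom_fin2: "finite V \<Longrightarrow> dominating V E D \<Longrightarrow> finite D"
  by (auto simp: dominating_def intro: finite_subset)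

theorem theorem5:
  fixes V :: "'a set" and E :: "'a \<Rightarrow> 'a \<Rightarrow> bool" and v :: 'a
  assumes "simple_graph V E" and "v \<in> V"
  shows "v \<in> core V E \<longleftrightarrow>
           (isolated V E v
            \<or> domination_number (del_vertex_V V v) (del_vertex_E E v) > domination_number V E
            \<or> (domination_number (del_vertex_V V v) (del_vertex_E E v) = domination_number V E
               \<and> (\<forall>w \<in> nbrs V E v. w \<in> anticore (del_vertex_V V v) (del_vertex_E E v))))"
proof -
  let ?V = "del_vertex_V V v" and ?E = "del_vertex_E E v"
  let ?g = "domination_number V E" and ?g' = "domination_number ?V ?E"
  have fin: "finite V" and sym: "\<And>x y. E x y \<Longrightarrow> E y x" and irr: "\<And>x. \<not> E x x"
    and inV: "\<And>x y. E x y \<Longrightarrow> x \<in> V \<and> y \<in> V"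
    using assms(1) by (auto simp: simple_graph_def)
  have fin': "finite ?V" using fin by (simp add: del_vertex_V_def)
  have A: "dominating ?V ?E D" if "dominating V E D" "v \<notin> D" for D
    using that by (auto simp: dominating_def del_vertex_V_def del_vertex_E_def)
  have B: "dominating V E D" if "dominating ?V ?E D" "w \<in> D" "E v w" for D w
    using that by (auto simp: dominating_def del_vertex_V_def del_vertex_E_def)
  have Bw: "dominating V E (insert w D)" if "dominating ?V ?E D" "E v w" for D w
    using that inV by (auto simp: dominating_def del_vertex_V_def del_vertex_E_def)
  obtain D0 where D0: "mds ?V ?E D0" using mds_ex[OF fin'] by blast
  have D0f: "finite D0" using D0 fin' dom_fin2 by (auto simp: mds_def)
  have D0v: "v \<notin> D0" using D0 by (auto simp: mds_def dominating_def del_vertex_V_def)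
  show ?thesis
  proof
    assume core: "v \<in> core V E"
    have nomds: "\<And>D. mds V E D \<Longrightarrow> v \<in> D" using core by (auto simp: core_def)
    show "isolated V E v \<or> ?g' > ?g \<or> (?g' = ?g \<and> (\<forall>w \<in> nbrs V E v. w \<in> anticore ?V ?E))"
    proof (cases "isolated V E v \<or> ?g' > ?g")
      case True thus ?thesis by blast
    next
      case False
      then obtain w where w: "E v w" and le: "?g' \<le> ?g"
        by (auto simp: isolated_def nbrs_def)
      have wv: "w \<noteq> v" using w irr by auto
      have eq: "?g' = ?g"
      proof (rule ccontr)
        assume "?g' \<noteq> ?g"
        hence lt: "?g' < ?g" using le by auto
        have d: "dominating V E (insert w D0)" using Bw D0 w by (auto simp: mds_def)
        have "card (insert w D0) \<le> ?g' + 1" using D0f D0 card_insert_le_m1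
          by (simp add: mds_def card_insert_if)
        moreover have "?g \<le> card (insert w D0)" using dn_le[OF fin d] .
        ultimately have "mds V E (insert w D0)" using d lt by (auto simp: mds_def)
        thus False using nomds D0v wv by auto
      qed
      have "\<forall>w \<in> nbrs V E v. w \<in> anticore ?V ?E"
      proof
        fix u assume u: "u \<in> nbrs V E v"
        hence Evu: "E v u" and uV: "u \<in> V" and uv: "u \<noteq> v" using irr by (auto simp: nbrs_def)
        show "u \<in> anticore ?V ?E"
        proof (rule ccontr)
          assume "u \<notin> anticore ?V ?E"
          then obtain D where D: "mds ?V ?E D" "u \<in> D" using uV uv
            by (auto simp: anticore_def corona_def del_vertex_V_def)
          have "mds V E D" using B[OF _ D(2) Evu] D eq by (auto simp: mds_def)
          moreover have "v \<notin> D" using D by (auto simp: mds_def dominating_def del_vertex_V_def)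
          ultimately show False using nomds by auto
        qed
      qed
      thus ?thesis using eq by blast
    qed
  next
    assume H: "isolated V E v \<or> ?g' > ?g \<or> (?g' = ?g \<and> (\<forall>w \<in> nbrs V E v. w \<in> anticore ?V ?E))"
    show "v \<in> core V E"
      unfolding core_def
    proof (intro CollectI conjI allI impI assms(2))
      fix D assume D: "mds V E D"
      show "v \<in> D"
      proof (rule ccontr)
        assume vD: "v \<notin> D"
        have dD: "dominating V E D" using D by (simp add: mds_def)
        obtain d where d: "d \<in> D" "E v d" using dD vD assms(2) by (auto simp: dominating_def)
        have dV: "d \<in> V" "d \<noteq> v" using d inV irr by auto
        have A': "dominating ?V ?E D" using A[OF dD vD] .
        have ge: "?g' \<le> ?g" using dn_le[OF fin' A'] D by (simp add: mds_def)
        from H show False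
        proof (elim disjE conjE)
          assume "isolated V E v" thus False using d dV by (auto simp: isolated_def nbrs_def)
        next
          assume "?g' > ?g" thus False using ge by simp
        next
          assume eq: "?g' = ?g" and all: "\<forall>w \<in> nbrs V E v. w \<in> anticore ?V ?E"
          have "mds ?V ?E D" using A' D eq by (simp add: mds_def)
          hence "d \<in> corona ?V ?E" using d dV by (auto simp: corona_def del_vertex_V_def)
          moreover have "d \<in> nbrs V E v" using d dV by (auto simp: nbrs_def)
          ultimately show False using all by (auto simp: anticore_def)
        qed
      qed
    qed
  qed
qed

end
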